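(* Assume the approximate realizability assumption holds with $\epsilon_1=0$, i.e. for every $\pi\in\Pi$, $$\min_{f\in\mathcal F}\max_{\pi'\in\Pi}\Vert f-\mathcal T_r^\pi f\Vert_{2,d^{\pi'}}^2\le 0\quad\text{and}\quad \min_{g\in\mathcal G}\max_{\pi'\in\Pi}\Vert g-\mathcal T_c^\pi g\Vert_{2,d^{\pi'}}^2\le 0,$$ and assume the behavior policy satisfies $\mu\in\Pi$. Fix any $\beta\ge 0$ and $\lambda>0$. For each $\pi\in\Pi$ let $$f_r^\pi\in\arg\min_{f\in\mathcal F}\big[\mathcal L_\mu(\pi,f)+\beta\,\mathcal E_\mu(\pi,f)\big],\qquad f_c^\pi\in\arg\min_{g\in\mathcal G}\big[-\lambda\,\mathcal L_\mu(\pi,g)+\beta\,\hat{\mathcal E}_\mu(\pi,g)\big],$$ and let $$\hat\pi^*\in\arg\max_{\pi\in\Pi}\Big[\mathcal L_\mu(\pi,f_r^\pi)-\lambda\{\mathcal L_\mu(\pi,f_c^\pi)\}_+\Big]$$ (these optimizers being assumed to exist). Then $J_r(\hat\pi^* )\ge J_r(\mu)$ and $\{J_c(\hat\pi^* )\}_+\le\{J_c(\mu)\}_++\frac{1}{\lambda}$.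
   Context: Constrained MDP $(\mathcal S,\mathcal A,\mathcal P,R,C,\gamma,\rho)$: state space $\mathcal S$ (possibly infinite), finite action set $\mathcal A$, transition kernel $\mathcal P:\mathcal S\times\mathcal A\to\Delta(\mathcal S)$, reward $R:\mathcal S\times\mathcal A\to[0,1]$, cost $C:\mathcal S\times\mathcal A\to[-1,1]$, discount $\gamma\in[0,1)$, initial state distribution $\rho$. Let $V_{\max}=1/(1-\gamma)$. For a stationary policy $\pi:\mathcal S\to\Delta(\mathcal A)$, $Q_r^\pi(s,a)=\mathbb E[\sum_{t\ge0}\gamma^t R(s_t,a_t)\mid s_0=s,a_0=a,\ a_t\sim\pi(\cdot|s_t),\ s_{t+1}\sim\mathcal P(\cdot|s_t,a_t)]$, $Q_c^\pi$ likewise with $C$; $V_\diamond^\pi(s)=\sum_a\pi(a|s)Q_\diamond^\pi(s,a)$; $J_r(\pi)=(1-\gamma)\mathbb E_{s\sim\rho}[V_r^\pi(s)]$, $J_c(\pi)=(1-\gamma)\mathbb E_{s\sim\rho}[V_c^\pi(s)]$. The discounted occupancy is $d^\pi(s,a)=(1-\gamma)\mathbb E[\sum_{t\ge0}\gamma^t\mathbb 1(s_t=s,a_t=a)]$ with $s_0\sim\rho$, $a_t\sim\pi(\cdot|s_t)$. For $f:\mathcal S\times\mathcal A\to\mathbb R$ and a policy $\pi$, $f(s,\pi):=\sum_a\pi(a|s)f(s,a)$. Bellman operators: $(\mathcal T_r^\pi f)(s,a)=R(s,a)+\gamma\mathbb E_{s'\sim\mathcal P(\cdot|s,a)}[f(s',\pi)]$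 and $(\mathcal T_c^\pi f)(s,a)=C(s,a)+\gamma\mathbb E_{s'\sim\mathcal P(\cdot|s,a)}[f(s',\pi)]$. $\Vert g\Vert_{2,\nu}=\sqrt{\mathbb E_{\nu}[g^2]}$, and $\{x\}_+=\max\{x,0\}$. Function classes: a policy class $\Pi$; $\mathcal F\subseteq\{f:\mathcal S\times\mathcal A\to[0,V_{\max}]\}$; $\mathcal G\subseteq\{g:\mathcal S\times\mathcal A\to[-V_{\max},V_{\max}]\}$; $\mathcal W\subseteq\{w:\mathcal S\times\mathcal A\to[0,B_w]\}$ containing the constant function $1$. The data distribution $\mu\in\Delta(\mathcal S\times\mathcal A)$ is the discounted state-action occupancy of a behavior policy, also denoted $\mu$. Define $\mathcal L_\mu(\pi,f)=\mathbb E_{(s,a)\sim\mu}[f(s,\pi)-f(s,a)]$, $\mathcal E_\mu(\pi,f)=\max_{w\in\mathcal W}|\mathbb E_\mu[w(s,a)(f-\mathcal T_r^\pi f)(s,a)]|$, and $\hat{\mathcal E}_\mu(\pi,f)=\max_{w\in\mathcal W}|\mathbb E_\mu[w(s,a)(f-\mathcal T_c^\pi f)(s,a)]|$. *)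

theory Defs
  imports "HOL-Probability.Probability"
begin

definition SA :: "'s measure \<Rightarrow> ('s \<times> 'a) measure" where
  "SA M = M \<Otimes>\<^sub>M count_space UNIV"

definition act_dist :: "'s measure \<Rightarrow> ('s \<Rightarrow> 'a pmf) \<Rightarrow> 's \<Rightarrow> ('s \<times> 'a) measure" where
  "act_dist M pol s = distr (measure_pmf (pol s)) (SA M) (\<lambda>a. (s, a))"

definition nxt :: "'s measure \<Rightarrow> ('s \<Rightarrow> 'a \<Rightarrow> 's measure) \<Rightarrow> ('s \<Rightarrow> 'a pmf)
    \<Rightarrow> 's \<times> 'a \<Rightarrow> ('s \<times> 'a) measure" where
  "nxt M P pol x = P (fst x) (snd x) \<bind> act_dist M pol"

primrec sa_traj :: "'s measure \<Rightarrow> ('s \<Rightarrow> 'a \<Rightarrow> 's measure) \<Rightarrow> ('s \<Rightarrow> 'a pmf)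
    \<Rightarrow> nat \<Rightarrow> 's \<times> 'a \<Rightarrow> ('s \<times> 'a) measure" where
  "sa_traj M P pol 0 x = return (SA M) x"
| "sa_traj M P pol (Suc t) x = sa_traj M P pol t x \<bind> nxt M P pol"

definition sa_dist :: "'s measure \<Rightarrow> ('s \<Rightarrow> 'a \<Rightarrow> 's measure) \<Rightarrow> 's measure
    \<Rightarrow> ('s \<Rightarrow> 'a pmf) \<Rightarrow> nat \<Rightarrow> ('s \<times> 'a) measure" where
  "sa_dist M P rho pol t = (rho \<bind> act_dist M pol) \<bind> sa_traj M P pol t"

definition polval :: "('s \<Rightarrow> 'a::finite \<Rightarrow> real) \<Rightarrow> ('s \<Rightarrow> 'a pmf) \<Rightarrow> 's \<Rightarrow> real" where
  "polval f pol s = (\<Sum>a\<in>UNIV. pmf (pol s) a * f s a)"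

definition Qfun :: "'s measure \<Rightarrow> ('s \<Rightarrow> 'a \<Rightarrow> 's measure) \<Rightarrow> real \<Rightarrow> ('s \<Rightarrow> 'a pmf)
    \<Rightarrow> ('s \<Rightarrow> 'a \<Rightarrow> real) \<Rightarrow> 's \<Rightarrow> 'a \<Rightarrow> real" where
  "Qfun M P gamma pol Rw s a =
     (\<Sum>t. gamma ^ t * (\<integral>z. Rw (fst z) (snd z) \<partial>(sa_traj M P pol t (s, a))))"

definition Vfun :: "'s measure \<Rightarrow> ('s \<Rightarrow> 'a::finite \<Rightarrow> 's measure) \<Rightarrow> real \<Rightarrow> ('s \<Rightarrow> 'a pmf)
    \<Rightarrow> ('s \<Rightarrow> 'a \<Rightarrow> real) \<Rightarrow> 's \<Rightarrow> real" where
  "Vfun M P gamma pol Rw = polval (Qfun M P gamma pol Rw) pol"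

definition Jfun :: "'s measure \<Rightarrow> ('s \<Rightarrow> 'a::finite \<Rightarrow> 's measure) \<Rightarrow> real \<Rightarrow> 's measure
    \<Rightarrow> ('s \<Rightarrow> 'a pmf) \<Rightarrow> ('s \<Rightarrow> 'a \<Rightarrow> real) \<Rightarrow> real" where
  "Jfun M P gamma rho pol Rw = (1 - gamma) * (\<integral>s. Vfun M P gamma pol Rw s \<partial>rho)"

definition occ :: "'s measure \<Rightarrow> ('s \<Rightarrow> 'a \<Rightarrow> 's measure) \<Rightarrow> real \<Rightarrow> 's measure
    \<Rightarrow> ('s \<Rightarrow> 'a pmf) \<Rightarrow> ('s \<times> 'a) measure" where
  "occ M P gamma rho pol = measure_of (space (SA M)) (sets (SA M))
     (\<lambda>A. ennreal (1 - gamma) * (\<Sum>t. ennreal (gamma ^ t) * emeasure (sa_dist M P rho pol t) A))"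

definition bellman :: "('s \<Rightarrow> 'a \<Rightarrow> 's measure) \<Rightarrow> real \<Rightarrow> ('s \<Rightarrow> 'a pmf)
    \<Rightarrow> ('s \<Rightarrow> 'a::finite \<Rightarrow> real) \<Rightarrow> ('s \<Rightarrow> 'a \<Rightarrow> real) \<Rightarrow> 's \<Rightarrow> 'a \<Rightarrow> real" where
  "bellman P gamma pol Rw f s a = Rw s a + gamma * (\<integral>s'. polval f pol s' \<partial>(P s a))"

definition norm2 :: "('s \<times> 'a) measure \<Rightarrow> ('s \<Rightarrow> 'a \<Rightarrow> real) \<Rightarrow> real" where
  "norm2 nu g = sqrt (\<integral>z. (g (fst z) (snd z))\<^sup>2 \<partial>nu)"

definition Lmu :: "('s \<times> 'a::finite) measure \<Rightarrow> ('s \<Rightarrow> 'a pmf) \<Rightarrow> ('s \<Rightarrow> 'a \<Rightarrow> real) \<Rightarrow> real" where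
  "Lmu mu pol f = (\<integral>z. polval f pol (fst z) - f (fst z) (snd z) \<partial>mu)"

definition Emu :: "('s \<times> 'a) measure \<Rightarrow> ('s \<Rightarrow> 'a \<Rightarrow> real) set
    \<Rightarrow> ('s \<Rightarrow> 'a \<Rightarrow> real) \<Rightarrow> ('s \<Rightarrow> 'a \<Rightarrow> real) \<Rightarrow> real" where
  "Emu mu W f Tf = (SUP w\<in>W. \<bar>\<integral>z. w (fst z) (snd z) * (f (fst z) (snd z) - Tf (fst z) (snd z)) \<partial>mu\<bar>)"

end

theory Submission
  imports Defs
begin

lemma act_dist_meas:
  fixes pol :: "'s \<Rightarrow> 'a::finite pmf"
  assumes pm: "\<And>a. (\<lambda>s. pmf (pol s) a) \<in> borel_measurable M"
  shows "act_dist M pol \<in> M \<rightarrow>\<^sub>M prob_algebra (SA M)"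
proof (rule measurable_prob_algebraI)
  fix s assume s: "s \<in> space M"
  show "prob_space (act_dist M pol s)" unfolding act_dist_def
    by (rule prob_space.prob_space_distr) (auto simp: measure_pmf.prob_space_axioms SA_def space_pair_measure s)
next
  show "act_dist M pol \<in> M \<rightarrow>\<^sub>M subprob_algebra (SA M)"
  proof (rule measurable_subprob_algebra)
    fix s assume s: "s \<in> space M"
    show "subprob_space (act_dist M pol s)" unfolding act_dist_def
      by (rule prob_space_imp_subprob_space, rule prob_space.prob_space_distr) (auto simp: measure_pmf.prob_space_axioms SA_def space_pair_measure s)
    show "sets (act_dist M pol s) = sets (SA M)" unfolding act_dist_def by simp
  next
    fix A :: "('s \<times> 'a) set" assume A: "A \<in> sets (SA M)"
    have eq: "emeasure (act_dist M pol s) A = ennreal (\<Sum>a\<in>UNIV. pmf (pol s) a * indicator A (s, a))"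
      if s: "s \<in> space M" for s
    proof -
      have "emeasure (act_dist M pol s) A = emeasure (measure_pmf (pol s)) ((\<lambda>a. (s, a)) -` A)"
        unfolding act_dist_def using A s
        by (subst emeasure_distr) (auto simp: SA_def space_pair_measure)
      also have "\<dots> = ennreal (\<Sum>a\<in>(\<lambda>a. (s, a)) -` A. pmf (pol s) a)"
        using emeasure_measure_pmf_finite[of "(\<lambda>a. (s, a)) -` A" "pol s"] by simp
      also have "(\<Sum>a\<in>(\<lambda>a. (s, a)) -` A. pmf (pol s) a) = (\<Sum>a\<in>UNIV. pmf (pol s) a * indicator A (s, a))"
        by (subst sum.mono_neutral_left[of UNIV]) (auto simp: indicator_def intro!: sum.cong)
      finally show ?thesis .
    qed
    have "(\<lambda>s. ennreal (\<Sum>a\<in>UNIV. pmf (pol s) a * indicator A (s, a))) \<in> borel_measurable M"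
      using A pm unfolding SA_def by measurable
    then show "(\<lambda>s. emeasure (act_dist M pol s) A) \<in> borel_measurable M"
      by (rule measurable_cong[THEN iffD1, rotated]) (simp add: eq)
  qed
qed

lemma int_bound:
  fixes h :: "'b \<Rightarrow> real"
  assumes N: "prob_space N" and hm: "h \<in> borel_measurable N" and hb: "\<And>x. x \<in> space N \<Longrightarrow> \<bar>h x\<bar> \<le> B"
  shows "\<bar>\<integral>x. h x \<partial>N\<bar> \<le> B" and "integrable N h"
proof -
  interpret prob_space N by (rule N)
  show I: "integrable N h"
    by (rule integrable_const_bound[where B=B]) (use hb hm in auto)
  have "(\<integral>x. h x \<partial>N) \<le> B" by (rule integral_le_const[OF I], intro AE_I2) (use hb in \<open>fastforce simp: abs_le_iff\<close>)
  moreover have "-B \<le> (\<integral>x. h x \<partial>N)" by (rule integral_ge_const[OF I], intro AE_I2) (use hb in \<open>fastforce simp: abs_le_iff\<close>)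
  ultimately show "\<bar>\<integral>x. h x \<partial>N\<bar> \<le> B" by linarith
qed

lemma geom_summable:
  fixes x :: "nat \<Rightarrow> real"
  assumes g: "0 \<le> g" "g < 1" and b: "\<And>t. \<bar>x t\<bar> \<le> B"
  shows "summable (\<lambda>t. g ^ t * x t)"
proof (rule summable_comparison_test[where g="\<lambda>t. B * g ^ t"])
  have "norm (g ^ n * x n) \<le> B * g ^ n" for n
  proof -
    have "norm (g ^ n * x n) = g ^ n * \<bar>x n\<bar>" using g by (simp add: abs_mult)
    also have "\<dots> \<le> g ^ n * B" by (rule mult_left_mono[OF b]) (use g in simp)
    finally show ?thesis by (simp add: mult.commute)
  qed
  then show "\<exists>N. \<forall>n\<ge>N. norm (g ^ n * x n) \<le> B * g ^ n" by blast
  show "summable (\<lambda>t. B * g ^ t)" using g by (intro summable_mult summable_geometric) auto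
qed

lemma tele:
  fixes x :: "nat \<Rightarrow> real"
  assumes g: "0 \<le> g" "g < 1" and b: "\<And>t. \<bar>x t\<bar> \<le> B"
  shows "(\<Sum>t. g ^ t * x t) - g * (\<Sum>t. g ^ t * x (Suc t)) = x 0"
proof -
  have s: "summable (\<lambda>t. g ^ t * x t)" by (rule geom_summable[OF g b])
  have s2: "summable (\<lambda>t. g ^ t * x (Suc t))" by (rule geom_summable[OF g b])
  have "g * (\<Sum>t. g ^ t * x (Suc t)) = (\<Sum>t. g * (g ^ t * x (Suc t)))"
    using s2 by (rule suminf_mult[symmetric])
  also have "\<dots> = (\<Sum>t. g ^ Suc t * x (Suc t))" by (simp add: mult.assoc)
  also have "\<dots> = (\<Sum>t. g ^ t * x t) - x 0" using suminf_split_head[OF s] by simp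
  finally show ?thesis by simp
qed

locale cmdp =
  fixes M :: "'s measure" and P :: "'s \<Rightarrow> 'a::finite \<Rightarrow> 's measure"
    and gamma :: real and rho :: "'s measure"
  assumes gamma: "0 \<le> gamma" "gamma < 1"
    and kernel: "(\<lambda>x. P (fst x) (snd x)) \<in> SA M \<rightarrow>\<^sub>M prob_algebra M"
    and rho: "prob_space rho" "sets rho = sets M"
begin

abbreviation S :: "('s \<times> 'a) measure" where "S \<equiv> SA M"

definition polm :: "('s \<Rightarrow> 'a pmf) \<Rightarrow> bool" where
  "polm pol \<longleftrightarrow> (\<forall>a. (\<lambda>s. pmf (pol s) a) \<in> borel_measurable M)"

lemma space_S: "space S = space M \<times> UNIV"
  by (simp add: SA_def space_pair_measure)

lemma kernel_sub: "(\<lambda>x. P (fst x) (snd x)) \<in> S \<rightarrow>\<^sub>M subprob_algebra M"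
  by (rule measurable_prob_algebraD[OF kernel])

lemma P_space: "x \<in> space S \<Longrightarrow> prob_space (P (fst x) (snd x)) \<and> sets (P (fst x) (snd x)) = sets M"
  using measurable_space[OF kernel] by (auto simp: space_prob_algebra)

lemma act_meas: "polm pol \<Longrightarrow> act_dist M pol \<in> M \<rightarrow>\<^sub>M prob_algebra S"
  unfolding polm_def by (rule act_dist_meas) auto

lemma nxt_meas: assumes "polm pol" shows "nxt M P pol \<in> S \<rightarrow>\<^sub>M prob_algebra S"
proof (rule measurable_prob_algebraI)
  have a: "act_dist M pol \<in> M \<rightarrow>\<^sub>M subprob_algebra S"
    by (rule measurable_prob_algebraD[OF act_meas[OF assms]])
  show "nxt M P pol \<in> S \<rightarrow>\<^sub>M subprob_algebra S"
    unfolding nxt_def[abs_def] by (rule measurable_bind2[OF kernel_sub a])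
  fix x assume x: "x \<in> space S"
  interpret p: prob_space "P (fst x) (snd x)" using P_space[OF x] by simp
  show "prob_space (nxt M P pol x)" unfolding nxt_def
  proof (rule p.prob_space_bind[where S=S])
    show "act_dist M pol \<in> P (fst x) (snd x) \<rightarrow>\<^sub>M subprob_algebra S"
      using a measurable_cong_sets P_space[OF x] by blast
    show "AE y in P (fst x) (snd x). prob_space (act_dist M pol y)"
    proof (rule AE_I2)
      fix y assume "y \<in> space (P (fst x) (snd x))"
      then have "y \<in> space M" using P_space[OF x] sets_eq_imp_space_eq by blast
      then show "prob_space (act_dist M pol y)"
        using measurable_space[OF act_meas[OF assms]] by (auto simp: space_prob_algebra)
    qed
  qed
qed

lemma traj_meas: assumes "polm pol" shows "sa_traj M P pol t \<in> S \<rightarrow>\<^sub>M prob_algebra S"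
proof (induction t)
  case 0
  show ?case by (auto intro!: measurable_prob_algebraI prob_space_return)
next
  case (Suc t)
  show ?case
  proof (rule measurable_prob_algebraI)
    show "sa_traj M P pol (Suc t) \<in> S \<rightarrow>\<^sub>M subprob_algebra S"
      by (simp add: sa_traj.simps(2)[abs_def]) (rule measurable_bind2[OF measurable_prob_algebraD[OF Suc] measurable_prob_algebraD[OF nxt_meas[OF assms]]])
    fix x assume x: "x \<in> space S"
    interpret p: prob_space "sa_traj M P pol t x" using measurable_space[OF Suc x] by (simp add: space_prob_algebra)
    have ss: "sets (sa_traj M P pol t x) = sets S"
      using measurable_space[OF Suc x] by (simp add: space_prob_algebra)
    show "prob_space (sa_traj M P pol (Suc t) x)"
      unfolding sa_traj.simps(2)
    proof (rule p.prob_space_bind[where S=S])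
      show "nxt M P pol \<in> sa_traj M P pol t x \<rightarrow>\<^sub>M subprob_algebra S"
        by (subst measurable_cong_sets[OF ss refl]) (rule measurable_prob_algebraD[OF nxt_meas[OF assms]])
      show "AE y in sa_traj M P pol t x. prob_space (nxt M P pol y)"
      proof (rule AE_I2)
        fix y assume "y \<in> space (sa_traj M P pol t x)"
        then have "y \<in> space S" using sets_eq_imp_space_eq[OF ss] by auto
        then show "prob_space (nxt M P pol y)"
          using measurable_space[OF nxt_meas[OF assms]] by (auto simp: space_prob_algebra)
      qed
    qed
  qed
qed

end

lemma kern_int:
  fixes h :: "'b \<Rightarrow> real"
  assumes K: "K \<in> N \<rightarrow>\<^sub>M prob_algebra T"
    and hm: "h \<in> borel_measurable T" and hb: "\<And>x. x \<in> space T \<Longrightarrow> \<bar>h x\<bar> \<le> B"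
  shows "(\<lambda>x. \<integral>y. h y \<partial>K x) \<in> borel_measurable N"
    and "\<And>x. x \<in> space N \<Longrightarrow> \<bar>\<integral>y. h y \<partial>K x\<bar> \<le> B"
proof -
  have Ks: "K \<in> N \<rightarrow>\<^sub>M subprob_algebra T" by (rule measurable_prob_algebraD[OF K])
  have Kx: "x \<in> space N \<Longrightarrow> prob_space (K x) \<and> sets (K x) = sets T" for x
    using measurable_space[OF K] by (auto simp: space_prob_algebra)
  show "(\<lambda>x. \<integral>y. h y \<partial>K x) \<in> borel_measurable N"
    by (rule measurable_compose[OF Ks integral_measurable_subprob_algebra[OF hm]])
  show "\<And>x. x \<in> space N \<Longrightarrow> \<bar>\<integral>y. h y \<partial>K x\<bar> \<le> B"
  proof -
    fix x assume x: "x \<in> space N"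
    show "\<bar>\<integral>y. h y \<partial>K x\<bar> \<le> B"
    proof (rule int_bound(1))
      show "prob_space (K x)" using Kx[OF x] by simp
      show "h \<in> borel_measurable (K x)" using Kx[OF x] hm measurable_cong_sets by blast
      show "\<And>y. y \<in> space (K x) \<Longrightarrow> \<bar>h y\<bar> \<le> B" using Kx[OF x] hb sets_eq_imp_space_eq by blast
    qed
  qed
qed

lemma int_bind_prob:
  fixes h :: "'b \<Rightarrow> real"
  assumes N: "prob_space N" and K: "K \<in> N \<rightarrow>\<^sub>M prob_algebra T"
    and hm: "h \<in> borel_measurable T" and hb: "\<And>x. x \<in> space T \<Longrightarrow> \<bar>h x\<bar> \<le> B"
  shows "(\<integral>x. h x \<partial>(N \<bind> K)) = (\<integral>x. (\<integral>y. h y \<partial>K x) \<partial>N)"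
    and "(\<lambda>x. \<integral>y. h y \<partial>K x) \<in> borel_measurable N"
    and "\<And>x. x \<in> space N \<Longrightarrow> \<bar>\<integral>y. h y \<partial>K x\<bar> \<le> B"
    and "prob_space (N \<bind> K)" and "sets (N \<bind> K) = sets T"
proof -
  interpret prob_space N by (rule N)
  have Ks: "K \<in> N \<rightarrow>\<^sub>M subprob_algebra T" by (rule measurable_prob_algebraD[OF K])
  have Kx: "x \<in> space N \<Longrightarrow> prob_space (K x) \<and> sets (K x) = sets T" for x
    using measurable_space[OF K] by (auto simp: space_prob_algebra)
  show "(\<integral>x. h x \<partial>(N \<bind> K)) = (\<integral>x. (\<integral>y. h y \<partial>K x) \<partial>N)"
    by (rule integral_bind[OF hm hb Ks, where B'=1])
       (auto intro!: AE_I2 simp: finite_measure_axioms dest!: Kx dest: prob_space.emeasure_space_1)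
  show "(\<lambda>x. \<integral>y. h y \<partial>K x) \<in> borel_measurable N" "\<And>x. x \<in> space N \<Longrightarrow> \<bar>\<integral>y. h y \<partial>K x\<bar> \<le> B"
    using kern_int[OF K hm hb] by auto
  show "prob_space (N \<bind> K)"
    by (rule prob_space_bind[OF _ Ks]) (auto intro!: AE_I2 dest: Kx)
  show "sets (N \<bind> K) = sets T"
    by (rule sets_bind) (auto dest: Kx simp: not_empty)
qed

context cmdp begin

definition K0 :: "('s \<Rightarrow> 'a pmf) \<Rightarrow> ('s \<times> 'a) measure" where
  "K0 pol = rho \<bind> act_dist M pol"

abbreviation D where "D pol t \<equiv> sa_dist M P rho pol t"

lemma D_def': "D pol t = K0 pol \<bind> sa_traj M P pol t"
  by (simp add: sa_dist_def K0_def)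

lemma space_rho: "space rho = space M"
  using rho(2) by (rule sets_eq_imp_space_eq)

lemma act_rho: "polm pol \<Longrightarrow> act_dist M pol \<in> rho \<rightarrow>\<^sub>M prob_algebra S"
  using act_meas measurable_cong_sets[OF rho(2) refl] by blast

lemma int_act:
  fixes h :: "'s \<times> 'a \<Rightarrow> real"
  assumes s: "s \<in> space M" and hm: "h \<in> borel_measurable S"
  shows "(\<integral>x. h x \<partial>act_dist M pol s) = polval (\<lambda>s a. h (s, a)) pol s"
proof -
  have "(\<integral>x. h x \<partial>act_dist M pol s) = (\<integral>a. h (s, a) \<partial>measure_pmf (pol s))"
    unfolding act_dist_def
    by (rule integral_distr) (use s hm in \<open>auto simp: space_S\<close>)
  also have "\<dots> = (\<Sum>a\<in>UNIV. pmf (pol s) a *\<^sub>R h (s, a))"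
    by (rule integral_measure_pmf) auto
  finally show ?thesis by (simp add: polval_def)
qed

lemma K0_prob: assumes "polm pol" shows "prob_space (K0 pol)" "sets (K0 pol) = sets S"
  using int_bind_prob(4,5)[OF rho(1) act_rho[OF assms], of "\<lambda>_. 0" 0]
  by (auto simp: K0_def)

lemma space_K0: "polm pol \<Longrightarrow> space (K0 pol) = space S"
  using K0_prob(2) sets_eq_imp_space_eq by blast

lemma traj_K0: "polm pol \<Longrightarrow> sa_traj M P pol t \<in> K0 pol \<rightarrow>\<^sub>M prob_algebra S"
  using traj_meas measurable_cong_sets[OF K0_prob(2) refl] by blast

lemma D_prob: assumes "polm pol" shows "prob_space (D pol t)" "sets (D pol t) = sets S"
  using int_bind_prob(4,5)[OF K0_prob(1)[OF assms] traj_K0[OF assms], of "\<lambda>_. 0" 0]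
  by (auto simp: D_def')

lemma space_D: "polm pol \<Longrightarrow> space (D pol t) = space S"
  using D_prob(2) sets_eq_imp_space_eq by blast

lemma int_K0:
  fixes h :: "'s \<times> 'a \<Rightarrow> real"
  assumes pol: "polm pol" and hm: "h \<in> borel_measurable S" and hb: "\<And>x. x \<in> space S \<Longrightarrow> \<bar>h x\<bar> \<le> B"
  shows "(\<integral>x. h x \<partial>K0 pol) = (\<integral>s. polval (\<lambda>s a. h (s, a)) pol s \<partial>rho)"
proof -
  have "(\<integral>x. h x \<partial>K0 pol) = (\<integral>s. (\<integral>x. h x \<partial>act_dist M pol s) \<partial>rho)"
    unfolding K0_def by (rule int_bind_prob(1)[OF rho(1) act_rho[OF pol] hm hb])
  also have "\<dots> = (\<integral>s. polval (\<lambda>s a. h (s, a)) pol s \<partial>rho)"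
  proof (rule Bochner_Integration.integral_cong[OF refl])
    fix s assume "s \<in> space rho"
    then have "s \<in> space M" by (simp add: space_rho)
    then show "(\<integral>x. h x \<partial>act_dist M pol s) = polval (\<lambda>s a. h (s, a)) pol s" by (rule int_act[OF _ hm])
  qed
  finally show ?thesis .
qed

lemma int_D0:
  fixes h :: "'s \<times> 'a \<Rightarrow> real"
  assumes pol: "polm pol" and hm: "h \<in> borel_measurable S" and hb: "\<And>x. x \<in> space S \<Longrightarrow> \<bar>h x\<bar> \<le> B"
  shows "(\<integral>x. h x \<partial>D pol 0) = (\<integral>s. polval (\<lambda>s a. h (s, a)) pol s \<partial>rho)"
proof -
  have "D pol 0 = K0 pol" unfolding D_def' sa_traj.simps(1)
    by (rule bind_return''[OF K0_prob(2)[OF pol]])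
  then show ?thesis using int_K0[OF assms] by simp
qed

abbreviation Pk where "Pk y \<equiv> P (fst y) (snd y)"

lemma int_nxt:
  fixes h :: "'s \<times> 'a \<Rightarrow> real"
  assumes pol: "polm pol" and hm: "h \<in> borel_measurable S" and hb: "\<And>x. x \<in> space S \<Longrightarrow> \<bar>h x\<bar> \<le> B"
    and y: "y \<in> space S"
  shows "(\<integral>x. h x \<partial>nxt M P pol y) = (\<integral>s. polval (\<lambda>s a. h (s, a)) pol s \<partial>Pk y)"
proof -
  have ps: "prob_space (Pk y)" "sets (Pk y) = sets M" using P_space[OF y] by auto
  have sp: "space (Pk y) = space M" using ps(2) sets_eq_imp_space_eq by blast
  have a: "act_dist M pol \<in> Pk y \<rightarrow>\<^sub>M prob_algebra S"
    using act_meas[OF pol] measurable_cong_sets[OF ps(2) refl] by blast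
  have "(\<integral>x. h x \<partial>nxt M P pol y) = (\<integral>s. (\<integral>x. h x \<partial>act_dist M pol s) \<partial>Pk y)"
    unfolding nxt_def by (rule int_bind_prob(1)[OF ps(1) a hm hb])
  also have "\<dots> = (\<integral>s. polval (\<lambda>s a. h (s, a)) pol s \<partial>Pk y)"
  proof (rule Bochner_Integration.integral_cong[OF refl])
    fix s assume "s \<in> space (Pk y)"
    then have "s \<in> space M" by (simp add: sp)
    then show "(\<integral>x. h x \<partial>act_dist M pol s) = polval (\<lambda>s a. h (s, a)) pol s" by (rule int_act[OF _ hm])
  qed
  finally show ?thesis .
qed

lemma int_Dsuc:
  fixes h :: "'s \<times> 'a \<Rightarrow> real"
  assumes pol: "polm pol" and hm: "h \<in> borel_measurable S" and hb: "\<And>x. x \<in> space S \<Longrightarrow> \<bar>h x\<bar> \<le> B"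
  shows "(\<integral>x. h x \<partial>D pol (Suc t)) = (\<integral>y. (\<integral>s. polval (\<lambda>s a. h (s, a)) pol s \<partial>Pk y) \<partial>D pol t)"
proof -
  define Nh where "Nh y = (\<integral>x. h x \<partial>nxt M P pol y)" for y
  have Nm: "Nh \<in> borel_measurable S" and Nb: "\<And>y. y \<in> space S \<Longrightarrow> \<bar>Nh y\<bar> \<le> B"
    using kern_int[OF nxt_meas[OF pol] hm hb] unfolding Nh_def by auto
  have "(\<integral>x. h x \<partial>D pol (Suc t)) = (\<integral>x. (\<integral>z. h z \<partial>sa_traj M P pol (Suc t) x) \<partial>K0 pol)"
    unfolding D_def' by (rule int_bind_prob(1)[OF K0_prob(1)[OF pol] traj_K0[OF pol] hm hb])
  also have "\<dots> = (\<integral>x. (\<integral>y. Nh y \<partial>sa_traj M P pol t x) \<partial>K0 pol)"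
  proof (rule Bochner_Integration.integral_cong[OF refl])
    fix x assume x: "x \<in> space (K0 pol)"
    then have xs: "x \<in> space S" using space_K0[OF pol] by simp
    have tp: "prob_space (sa_traj M P pol t x)" "sets (sa_traj M P pol t x) = sets S"
      using measurable_space[OF traj_meas[OF pol] xs] by (auto simp: space_prob_algebra)
    have nx: "nxt M P pol \<in> sa_traj M P pol t x \<rightarrow>\<^sub>M prob_algebra S"
      using nxt_meas[OF pol] measurable_cong_sets[OF tp(2) refl] by blast
    show "(\<integral>z. h z \<partial>sa_traj M P pol (Suc t) x) = (\<integral>y. Nh y \<partial>sa_traj M P pol t x)"
      unfolding sa_traj.simps(2) Nh_def by (rule int_bind_prob(1)[OF tp(1) nx hm hb])
  qed
  also have "\<dots> = (\<integral>y. Nh y \<partial>D pol t)"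
    unfolding D_def' by (rule int_bind_prob(1)[OF K0_prob(1)[OF pol] traj_K0[OF pol] Nm Nb, symmetric])
  also have "\<dots> = (\<integral>y. (\<integral>s. polval (\<lambda>s a. h (s, a)) pol s \<partial>Pk y) \<partial>D pol t)"
    by (rule Bochner_Integration.integral_cong[OF refl]) (auto simp: space_D[OF pol] Nh_def int_nxt[OF pol hm hb])
  finally show ?thesis .
qed

end

context cmdp begin

abbreviation G :: "nat measure" where "G \<equiv> measure_pmf (geometric_pmf (1 - gamma))"

lemma pmfG: "pmf (geometric_pmf (1 - gamma)) t = gamma ^ t * (1 - gamma)"
  using gamma by (subst pmf_geometric) auto

lemma D_kern: assumes pol: "polm pol" shows "D pol \<in> G \<rightarrow>\<^sub>M prob_algebra S"
  using D_prob[OF pol] by (auto simp: space_prob_algebra)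

lemma occ_eq: assumes pol: "polm pol" shows "occ M P gamma rho pol = G \<bind> D pol"
proof -
  have ne: "space G \<noteq> {}" by simp
  have sb: "sets (G \<bind> D pol) = sets S"
    by (rule sets_bind) (auto simp: D_prob[OF pol])
  have spb: "space (G \<bind> D pol) = space S" using sb sets_eq_imp_space_eq by blast
  have "G \<bind> D pol = measure_of (space S) (sets S) (emeasure (G \<bind> D pol))"
    using measure_of_of_measure[of "G \<bind> D pol"] sb spb by simp
  also have "\<dots> = occ M P gamma rho pol"
    unfolding occ_def
  proof (rule measure_of_eq)
    show "sets S \<subseteq> Pow (space S)" by (rule sets.space_closed)
    fix A assume "A \<in> sigma_sets (space S) (sets S)"
    then have A: "A \<in> sets S" by (simp add: sets.sigma_sets_eq)
    have "emeasure (G \<bind> D pol) A = (\<integral>\<^sup>+t. emeasure (D pol t) A \<partial>G)"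
      by (rule emeasure_bind[OF ne measurable_prob_algebraD[OF D_kern[OF pol]] A])
    also have "\<dots> = (\<integral>\<^sup>+t. ennreal (pmf (geometric_pmf (1 - gamma)) t) * emeasure (D pol t) A \<partial>count_space UNIV)"
      by (rule nn_integral_measure_pmf)
    also have "\<dots> = (\<Sum>t. ennreal (pmf (geometric_pmf (1 - gamma)) t) * emeasure (D pol t) A)"
      by (rule nn_integral_count_space_nat)
    also have "\<dots> = (\<Sum>t. ennreal (1 - gamma) * (ennreal (gamma ^ t) * emeasure (D pol t) A))"
    proof (rule suminf_cong)
      fix t
      have "ennreal (gamma ^ t * (1 - gamma)) = ennreal (gamma ^ t) * ennreal (1 - gamma)"
        by (rule ennreal_mult) (use gamma in auto)
      then show "ennreal (pmf (geometric_pmf (1 - gamma)) t) * emeasure (D pol t) A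
          = ennreal (1 - gamma) * (ennreal (gamma ^ t) * emeasure (D pol t) A)"
        by (simp only: pmfG mult_ac)
    qed
    also have "\<dots> = ennreal (1 - gamma) * (\<Sum>t. ennreal (gamma ^ t) * emeasure (D pol t) A)"
      by (rule ennreal_suminf_cmult)
    finally show "emeasure (G \<bind> D pol) A = ennreal (1 - gamma) * (\<Sum>t. ennreal (gamma ^ t) * emeasure (D pol t) A)" .
  qed
  finally show ?thesis by simp
qed

lemma occ_prob: assumes pol: "polm pol"
  shows "prob_space (occ M P gamma rho pol)" "sets (occ M P gamma rho pol) = sets S"
  unfolding occ_eq[OF pol]
  using int_bind_prob(4,5)[OF measure_pmf.prob_space_axioms D_kern[OF pol], where h="\<lambda>_. 0::real" and B=0] by auto

lemma space_occ: "polm pol \<Longrightarrow> space (occ M P gamma rho pol) = space S"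
  using occ_prob(2) sets_eq_imp_space_eq by blast

lemma D_bound:
  fixes h :: "'s \<times> 'a \<Rightarrow> real"
  assumes pol: "polm pol" and hm: "h \<in> borel_measurable S" and hb: "\<And>x. x \<in> space S \<Longrightarrow> \<bar>h x\<bar> \<le> B"
  shows "\<bar>\<integral>x. h x \<partial>D pol t\<bar> \<le> B" "integrable (D pol t) h"
proof -
  have m: "h \<in> borel_measurable (D pol t)"
    using hm measurable_cong_sets[OF D_prob(2)[OF pol] refl] by blast
  have b: "\<And>x. x \<in> space (D pol t) \<Longrightarrow> \<bar>h x\<bar> \<le> B" using hb space_D[OF pol] by blast
  show "\<bar>\<integral>x. h x \<partial>D pol t\<bar> \<le> B" "integrable (D pol t) h"
    using int_bound[OF D_prob(1)[OF pol] m b] by auto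
qed

lemma int_occ:
  fixes h :: "'s \<times> 'a \<Rightarrow> real"
  assumes pol: "polm pol" and hm: "h \<in> borel_measurable S" and hb: "\<And>x. x \<in> space S \<Longrightarrow> \<bar>h x\<bar> \<le> B"
  shows "(\<integral>x. h x \<partial>occ M P gamma rho pol) = (1 - gamma) * (\<Sum>t. gamma ^ t * (\<integral>x. h x \<partial>D pol t))"
proof -
  define g where "g t = (\<integral>x. h x \<partial>D pol t)" for t
  have gb: "\<bar>g t\<bar> \<le> B" for t unfolding g_def by (rule D_bound[OF pol hm hb])
  have sg: "summable (\<lambda>t. gamma ^ t * g t)" by (rule geom_summable[OF gamma gb])
  have "(\<integral>x. h x \<partial>occ M P gamma rho pol) = (\<integral>t. g t \<partial>G)"
    unfolding occ_eq[OF pol] g_def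
    by (rule int_bind_prob(1)[OF measure_pmf.prob_space_axioms D_kern[OF pol] hm hb])
  also have "\<dots> = (\<integral>t. pmf (geometric_pmf (1 - gamma)) t * g t \<partial>count_space UNIV)"
    unfolding measure_pmf_eq_density by (subst integral_density) auto
  also have "\<dots> = (\<Sum>t. pmf (geometric_pmf (1 - gamma)) t * g t)"
  proof (rule integral_count_space_nat)
    have "summable (\<lambda>t. gamma ^ t * ((1 - gamma) * \<bar>g t\<bar>))"
    proof (rule geom_summable[OF gamma])
      fix t show "\<bar>(1 - gamma) * \<bar>g t\<bar>\<bar> \<le> (1 - gamma) * B"
        using gamma gb[of t] by (simp add: abs_mult mult_left_mono)
    qed
    then show "integrable (count_space UNIV) (\<lambda>t. pmf (geometric_pmf (1 - gamma)) t * g t)"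
      unfolding integrable_count_space_nat_iff using gamma
      by (simp add: pmfG abs_mult mult.commute mult.left_commute)
  qed
  also have "\<dots> = (\<Sum>t. (1 - gamma) * (gamma ^ t * g t))"
    by (simp add: pmfG mult.commute mult.left_commute)
  also have "\<dots> = (1 - gamma) * (\<Sum>t. gamma ^ t * g t)"
    by (rule suminf_mult[OF sg])
  finally show ?thesis by (simp add: g_def)
qed

end

lemma polval_bound:
  fixes f :: "'s \<Rightarrow> 'a::finite \<Rightarrow> real"
  assumes b: "\<And>a. \<bar>f s a\<bar> \<le> B"
  shows "\<bar>polval f pol s\<bar> \<le> B"
proof -
  have "\<bar>polval f pol s\<bar> \<le> (\<Sum>a\<in>UNIV. \<bar>pmf (pol s) a * f s a\<bar>)"
    unfolding polval_def by (rule sum_abs)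
  also have "\<dots> \<le> (\<Sum>a\<in>UNIV. pmf (pol s) a * B)"
  proof (rule sum_mono)
    fix a
    have "\<bar>pmf (pol s) a * f s a\<bar> = pmf (pol s) a * \<bar>f s a\<bar>" by (simp add: abs_mult)
    also have "\<dots> \<le> pmf (pol s) a * B" by (rule mult_left_mono[OF b]) simp
    finally show "\<bar>pmf (pol s) a * f s a\<bar> \<le> pmf (pol s) a * B" .
  qed
  also have "\<dots> = (\<Sum>a\<in>UNIV. pmf (pol s) a) * B" by (rule sum_distrib_right[symmetric])
  also have "(\<Sum>a\<in>UNIV. pmf (pol s) a) = 1" by (rule sum_pmf_eq_1) auto
  finally show ?thesis by simp
qed

lemma polval_const:
  fixes c :: "'s \<Rightarrow> real"
  shows "polval (\<lambda>s (a::'a::finite). c s) pol s = c s"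
proof -
  have "polval (\<lambda>s (a::'a). c s) pol s = (\<Sum>a\<in>UNIV. pmf (pol s) a) * c s"
    unfolding polval_def by (rule sum_distrib_right[symmetric])
  also have "(\<Sum>a\<in>UNIV. pmf (pol s) a) = 1" by (rule sum_pmf_eq_1) auto
  finally show ?thesis by simp
qed

lemma summable_geom_bound:
  fixes x :: "nat \<Rightarrow> real"
  assumes g: "0 \<le> g" "g < 1" and b: "\<And>t. \<bar>x t\<bar> \<le> g ^ t * B"
  shows "summable x"
proof (rule summable_comparison_test[where g="\<lambda>t. B * g ^ t"])
  show "\<exists>N. \<forall>n\<ge>N. norm (x n) \<le> B * g ^ n" using b by (auto simp: mult.commute)
  show "summable (\<lambda>t. B * g ^ t)" using g by (intro summable_mult summable_geometric) auto
qed

context cmdp begin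

lemma polval_meas:
  fixes f :: "'s \<Rightarrow> 'a \<Rightarrow> real"
  assumes pol: "polm pol" and fm: "(\<lambda>x. f (fst x) (snd x)) \<in> borel_measurable S"
  shows "polval f pol \<in> borel_measurable M"
proof -
  have fa: "(\<lambda>s. f s a) \<in> borel_measurable M" for a
  proof -
    have "(\<lambda>s. (s, a)) \<in> M \<rightarrow>\<^sub>M S" unfolding SA_def by (rule measurable_Pair2') simp
    from measurable_compose[OF this fm] show ?thesis by simp
  qed
  have pa: "(\<lambda>s. pmf (pol s) a) \<in> borel_measurable M" for a using pol by (simp add: polm_def)
  have "(\<lambda>s. \<Sum>a\<in>UNIV. pmf (pol s) a * f s a) \<in> borel_measurable M"
    by (intro borel_measurable_sum borel_measurable_times pa fa)
  then show ?thesis by (simp add: polval_def[abs_def])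
qed

lemma J_eq:
  fixes Rw :: "'s \<Rightarrow> 'a \<Rightarrow> real"
  assumes pol: "polm pol" and rm: "(\<lambda>x. Rw (fst x) (snd x)) \<in> borel_measurable S"
    and rb: "\<And>s a. \<bar>Rw s a\<bar> \<le> 1"
  shows "Jfun M P gamma rho pol Rw = (1 - gamma) * (\<Sum>t. gamma ^ t * (\<integral>x. Rw (fst x) (snd x) \<partial>D pol t))"
proof -
  define r where "r x = Rw (fst x) (snd x)" for x
  have rm': "r \<in> borel_measurable S" using rm by (simp add: r_def[abs_def])
  have rb': "\<And>x. x \<in> space S \<Longrightarrow> \<bar>r x\<bar> \<le> 1" using rb by (simp add: r_def)
  define q where "q t x = (\<integral>z. r z \<partial>sa_traj M P pol t x)" for t x
  have qm: "q t \<in> borel_measurable S" for t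
    using kern_int(1)[OF traj_meas[OF pol] rm' rb'] by (simp add: q_def[abs_def])
  have qb: "\<And>x. x \<in> space S \<Longrightarrow> \<bar>q t x\<bar> \<le> 1" for t
    using kern_int(2)[OF traj_meas[OF pol] rm' rb'] by (simp add: q_def)
  define pv where "pv t s = polval (\<lambda>s a. q t (s, a)) pol s" for t s
  have pvm: "pv t \<in> borel_measurable M" for t
    unfolding pv_def[abs_def] by (rule polval_meas[OF pol]) (simp add: qm)
  have pvb: "\<bar>pv t s\<bar> \<le> 1" if s: "s \<in> space M" for t s
    unfolding pv_def by (rule polval_bound) (use qb s in \<open>simp add: space_S\<close>)
  have Dt: "(\<integral>x. r x \<partial>D pol t) = (\<integral>s. pv t s \<partial>rho)" for t
  proof -
    have "(\<integral>x. r x \<partial>D pol t) = (\<integral>x. q t x \<partial>K0 pol)"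
      unfolding D_def' q_def by (rule int_bind_prob(1)[OF K0_prob(1)[OF pol] traj_K0[OF pol] rm' rb'])
    also have "\<dots> = (\<integral>s. pv t s \<partial>rho)"
      unfolding pv_def by (rule int_K0[OF pol qm qb])
    finally show ?thesis .
  qed
  have V: "Vfun M P gamma pol Rw s = (\<Sum>t. gamma ^ t * pv t s)" if s: "s \<in> space M" for s
  proof -
    have Q: "Qfun M P gamma pol Rw s a = (\<Sum>t. gamma ^ t * q t (s, a))" for a
      by (simp add: Qfun_def q_def r_def)
    have sm: "summable (\<lambda>t. gamma ^ t * q t (s, a))" for a
      by (rule geom_summable[OF gamma, where B=1]) (use qb s in \<open>simp add: space_S\<close>)
    have "Vfun M P gamma pol Rw s = (\<Sum>a\<in>UNIV. pmf (pol s) a * (\<Sum>t. gamma ^ t * q t (s, a)))"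
      by (simp add: Vfun_def polval_def Q)
    also have "\<dots> = (\<Sum>a\<in>UNIV. (\<Sum>t. pmf (pol s) a * (gamma ^ t * q t (s, a))))"
      by (rule sum.cong[OF refl]) (rule suminf_mult[OF sm, symmetric])
    also have "\<dots> = (\<Sum>t. \<Sum>a\<in>UNIV. pmf (pol s) a * (gamma ^ t * q t (s, a)))"
      by (rule suminf_sum[symmetric]) (rule summable_mult[OF sm])
    also have "\<dots> = (\<Sum>t. gamma ^ t * pv t s)"
      by (rule suminf_cong) (simp add: pv_def polval_def sum_distrib_left mult_ac)
    finally show ?thesis .
  qed
  have "(\<integral>s. Vfun M P gamma pol Rw s \<partial>rho) = (\<integral>s. (\<Sum>t. gamma ^ t * pv t s) \<partial>rho)"
    by (rule Bochner_Integration.integral_cong[OF refl]) (simp add: V space_rho)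
  also have "\<dots> = (\<Sum>t. (\<integral>s. gamma ^ t * pv t s \<partial>rho))"
  proof (rule integral_suminf)
    have m: "(\<lambda>s. gamma ^ t * pv t s) \<in> borel_measurable rho" for t
    proof -
      have "pv t \<in> borel_measurable rho" by (subst measurable_cong_sets[OF rho(2) refl]) (rule pvm)
      then show ?thesis by (rule borel_measurable_times[OF borel_measurable_const])
    qed
    have b: "\<And>s. s \<in> space rho \<Longrightarrow> \<bar>gamma ^ t * pv t s\<bar> \<le> gamma ^ t * 1" for t
    proof -
      fix s assume "s \<in> space rho"
      then have "\<bar>pv t s\<bar> \<le> 1" using pvb by (simp add: space_rho)
      then have "gamma ^ t * \<bar>pv t s\<bar> \<le> gamma ^ t * 1" by (rule mult_left_mono) (use gamma in simp)
      then show "\<bar>gamma ^ t * pv t s\<bar> \<le> gamma ^ t * 1" using gamma by (simp add: abs_mult)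
    qed
    show "integrable rho (\<lambda>s. gamma ^ t * pv t s)" for t
      by (rule int_bound(2)[OF rho(1) m b])
    show "AE s in rho. summable (\<lambda>t. norm (gamma ^ t * pv t s))"
    proof (rule AE_I2)
      fix s assume "s \<in> space rho"
      then show "summable (\<lambda>t. norm (gamma ^ t * pv t s))"
        using b by (intro summable_geom_bound[OF gamma, where B=1]) auto
    qed
    show "summable (\<lambda>t. \<integral>s. norm (gamma ^ t * pv t s) \<partial>rho)"
    proof (rule summable_geom_bound[OF gamma, where B=1])
      fix t
      have m2: "(\<lambda>s. norm (gamma ^ t * pv t s)) \<in> borel_measurable rho" using m by measurable
      show "\<bar>\<integral>s. norm (gamma ^ t * pv t s) \<partial>rho\<bar> \<le> gamma ^ t * 1"
        by (rule int_bound(1)[OF rho(1) m2]) (use b in auto)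
    qed
  qed
  also have "\<dots> = (\<Sum>t. gamma ^ t * (\<integral>s. pv t s \<partial>rho))" by simp
  also have "\<dots> = (\<Sum>t. gamma ^ t * (\<integral>x. r x \<partial>D pol t))" by (simp add: Dt)
  finally show ?thesis by (simp add: Jfun_def r_def)
qed

end

lemma sum_lin2:
  fixes x y :: "nat \<Rightarrow> real"
  assumes g: "0 \<le> g" "g < 1" and bx: "\<And>t. \<bar>x t\<bar> \<le> B1" and by': "\<And>t. \<bar>y t\<bar> \<le> B2"
  shows "(\<Sum>t. g ^ t * (x t - y t)) = (\<Sum>t. g ^ t * x t) - (\<Sum>t. g ^ t * y t)"
  using suminf_diff[OF geom_summable[OF g bx] geom_summable[OF g by']]
  by (simp add: right_diff_distrib)

lemma sum_lin3:
  fixes x y z :: "nat \<Rightarrow> real"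
  assumes g: "0 \<le> g" "g < 1" and bx: "\<And>t. \<bar>x t\<bar> \<le> B1" and by': "\<And>t. \<bar>y t\<bar> \<le> B2"
    and bz: "\<And>t. \<bar>z t\<bar> \<le> B3"
  shows "(\<Sum>t. g ^ t * (x t - y t - g * z t)) = (\<Sum>t. g ^ t * x t) - (\<Sum>t. g ^ t * y t) - g * (\<Sum>t. g ^ t * z t)"
proof -
  have sx: "summable (\<lambda>t. g ^ t * x t)" by (rule geom_summable[OF g bx])
  have sy: "summable (\<lambda>t. g ^ t * y t)" by (rule geom_summable[OF g by'])
  have sz: "summable (\<lambda>t. g ^ t * z t)" by (rule geom_summable[OF g bz])
  have sz': "summable (\<lambda>t. g * (g ^ t * z t))" by (rule summable_mult[OF sz])
  have "(\<Sum>t. g ^ t * (x t - y t - g * z t)) = (\<Sum>t. (g ^ t * x t - g ^ t * y t) - g * (g ^ t * z t))"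
    by (simp add: algebra_simps)
  also have "\<dots> = (\<Sum>t. g ^ t * x t - g ^ t * y t) - (\<Sum>t. g * (g ^ t * z t))"
    by (rule suminf_diff[symmetric]) (use summable_diff[OF sx sy] sz' in auto)
  also have "(\<Sum>t. g ^ t * x t - g ^ t * y t) = (\<Sum>t. g ^ t * x t) - (\<Sum>t. g ^ t * y t)"
    by (rule suminf_diff[OF sx sy, symmetric])
  also have "(\<Sum>t. g * (g ^ t * z t)) = g * (\<Sum>t. g ^ t * z t)"
    by (rule suminf_mult[OF sz])
  finally show ?thesis .
qed

context cmdp begin

lemma key:
  fixes f Rw :: "'s \<Rightarrow> 'a \<Rightarrow> real" and pi mu :: "'s \<Rightarrow> 'a pmf"
  assumes pi: "polm pi" and mu: "polm mu"
    and fm: "(\<lambda>x. f (fst x) (snd x)) \<in> borel_measurable S" and fb: "\<And>s a. \<bar>f s a\<bar> \<le> Bf"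
    and rm: "(\<lambda>x. Rw (fst x) (snd x)) \<in> borel_measurable S" and rb: "\<And>s a. \<bar>Rw s a\<bar> \<le> 1"
    and zpi: "AE x in occ M P gamma rho pi. f (fst x) (snd x) - bellman P gamma pi Rw f (fst x) (snd x) = 0"
    and zmu: "AE x in occ M P gamma rho mu. f (fst x) (snd x) - bellman P gamma pi Rw f (fst x) (snd x) = 0"
  shows "Lmu (occ M P gamma rho mu) pi f = Jfun M P gamma rho pi Rw - Jfun M P gamma rho mu Rw"
proof -
  define F where "F x = f (fst x) (snd x)" for x
  define Rr where "Rr x = Rw (fst x) (snd x)" for x
  define W where "W x = (\<integral>s'. polval f pi s' \<partial>Pk x)" for x
  define Fp :: "'s \<times> 'a \<Rightarrow> real" where "Fp x = polval f pi (fst x)" for x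
  define E where "E x = F x - Rr x - gamma * W x" for x
  have Bf: "0 \<le> Bf" using fb[of undefined undefined] by simp
  have Fm[measurable]: "F \<in> borel_measurable S" using fm by (simp add: F_def[abs_def])
  have Fb: "\<bar>F x\<bar> \<le> Bf" for x using fb by (simp add: F_def)
  have Rm[measurable]: "Rr \<in> borel_measurable S" using rm by (simp add: Rr_def[abs_def])
  have Rb: "\<bar>Rr x\<bar> \<le> 1" for x using rb by (simp add: Rr_def)
  have pvm: "polval f pi \<in> borel_measurable M" by (rule polval_meas[OF pi fm])
  have pvb: "\<bar>polval f pi s\<bar> \<le> Bf" for s by (rule polval_bound) (rule fb)
  have Wm[measurable]: "W \<in> borel_measurable S"
    using kern_int(1)[OF kernel pvm pvb] by (simp add: W_def[abs_def])
  have Wb: "\<bar>W x\<bar> \<le> Bf" if "x \<in> space S" for x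
    using kern_int(2)[OF kernel pvm pvb that] by (simp add: W_def)
  have Fpm[measurable]: "Fp \<in> borel_measurable S"
  proof -
    have "fst \<in> S \<rightarrow>\<^sub>M M" unfolding SA_def by (rule measurable_fst)
    from measurable_compose[OF this pvm] show ?thesis by (simp add: Fp_def[abs_def] comp_def)
  qed
  have Fpb: "\<bar>Fp x\<bar> \<le> Bf" for x using pvb by (simp add: Fp_def)
  have Em: "E \<in> borel_measurable S" unfolding E_def[abs_def] by measurable
  have Eb: "\<bar>E x\<bar> \<le> Bf + 1 + Bf" if x: "x \<in> space S" for x
  proof -
    have "\<bar>gamma * W x\<bar> \<le> 1 * Bf" unfolding abs_mult
      by (rule mult_mono) (use gamma Wb[OF x] Bf in auto)
    then show ?thesis using Fb[of x] Rb[of x] unfolding E_def by linarith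
  qed
  have Lm: "(\<lambda>x. Fp x - F x) \<in> borel_measurable S" by measurable
  have Lb: "\<bar>Fp x - F x\<bar> \<le> Bf + Bf" for x using Fpb[of x] Fb[of x] by linarith
  have bell: "f (fst x) (snd x) - bellman P gamma pi Rw f (fst x) (snd x) = E x" for x
    by (simp add: bellman_def E_def F_def Rr_def W_def)
  define a where "a nu t = (\<integral>x. F x \<partial>D nu t)" for nu t
  define r where "r nu t = (\<integral>x. Rr x \<partial>D nu t)" for nu t
  define w where "w nu t = (\<integral>x. W x \<partial>D nu t)" for nu t
  define b where "b nu t = (\<integral>x. Fp x \<partial>D nu t)" for nu t
  have ab: "polm nu \<Longrightarrow> \<bar>a nu t\<bar> \<le> Bf" for nu t unfolding a_def by (rule D_bound(1)) (use Fb in auto)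
  have rbd: "polm nu \<Longrightarrow> \<bar>r nu t\<bar> \<le> 1" for nu t unfolding r_def by (rule D_bound(1)) (use Rb in auto)
  have wb: "polm nu \<Longrightarrow> \<bar>w nu t\<bar> \<le> Bf" for nu t unfolding w_def by (rule D_bound(1)) (use Wb in auto)
  have bb: "polm nu \<Longrightarrow> \<bar>b nu t\<bar> \<le> Bf" for nu t unfolding b_def by (rule D_bound(1)) (use Fpb in auto)
  have intE: "(\<integral>x. E x \<partial>D nu t) = a nu t - r nu t - gamma * w nu t" if nu: "polm nu" for nu t
  proof -
    have iF: "integrable (D nu t) F" by (rule D_bound(2)[OF nu Fm]) (use Fb in auto)
    have iR: "integrable (D nu t) Rr" by (rule D_bound(2)[OF nu Rm]) (use Rb in auto)
    have iW: "integrable (D nu t) W" by (rule D_bound(2)[OF nu Wm Wb])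
    show ?thesis unfolding E_def a_def r_def w_def
      using iF iR iW by simp
  qed
  have intL: "(\<integral>x. Fp x - F x \<partial>D nu t) = b nu t - a nu t" if nu: "polm nu" for nu t
  proof -
    have iF: "integrable (D nu t) F" by (rule D_bound(2)[OF nu Fm]) (use Fb in auto)
    have iFp: "integrable (D nu t) Fp" by (rule D_bound(2)[OF nu Fpm]) (use Fpb in auto)
    show ?thesis unfolding a_def b_def using iF iFp by simp
  qed
  have wpi: "w pi t = a pi (Suc t)" for t
  proof -
    have "a pi (Suc t) = (\<integral>y. (\<integral>s. polval (\<lambda>s a. F (s, a)) pi s \<partial>Pk y) \<partial>D pi t)"
      unfolding a_def by (rule int_Dsuc[OF pi Fm]) (use Fb in auto)
    then show ?thesis by (simp add: w_def W_def F_def)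
  qed
  have wmu: "w mu t = b mu (Suc t)" for t
  proof -
    have "b mu (Suc t) = (\<integral>y. (\<integral>s. polval (\<lambda>s a. Fp (s, a)) mu s \<partial>Pk y) \<partial>D mu t)"
      unfolding b_def by (rule int_Dsuc[OF mu Fpm]) (use Fpb in auto)
    then show ?thesis by (simp add: w_def W_def Fp_def polval_const)
  qed
  define c0 where "c0 = (\<integral>s. polval f pi s \<partial>rho)"
  have a0: "a pi 0 = c0"
  proof -
    have "a pi 0 = (\<integral>s. polval (\<lambda>s a. F (s, a)) pi s \<partial>rho)"
      unfolding a_def by (rule int_D0[OF pi Fm]) (use Fb in auto)
    then show ?thesis by (simp add: c0_def F_def)
  qed
  have b0: "b mu 0 = c0"
  proof -
    have "b mu 0 = (\<integral>s. polval (\<lambda>s a. Fp (s, a)) mu s \<partial>rho)"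
      unfolding b_def by (rule int_D0[OF mu Fpm]) (use Fpb in auto)
    then show ?thesis by (simp add: c0_def Fp_def polval_const)
  qed
  have Jpi: "Jfun M P gamma rho pi Rw = (1 - gamma) * (\<Sum>t. gamma ^ t * r pi t)"
    using J_eq[OF pi rm rb] by (simp add: r_def Rr_def)
  have Jmu: "Jfun M P gamma rho mu Rw = (1 - gamma) * (\<Sum>t. gamma ^ t * r mu t)"
    using J_eq[OF mu rm rb] by (simp add: r_def Rr_def)
  have "0 = (\<integral>x. E x \<partial>occ M P gamma rho pi)"
    using integral_eq_zero_AE[OF zpi] by (simp add: bell)
  also have "\<dots> = (1 - gamma) * (\<Sum>t. gamma ^ t * (a pi t - r pi t - gamma * a pi (Suc t)))"
    using int_occ[OF pi Em Eb] by (simp add: intE[OF pi] wpi)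
  also have "\<dots> = (1 - gamma) * ((\<Sum>t. gamma ^ t * a pi t) - (\<Sum>t. gamma ^ t * r pi t) - gamma * (\<Sum>t. gamma ^ t * a pi (Suc t)))"
    by (subst sum_lin3[OF gamma ab[OF pi] rbd[OF pi] ab[OF pi]]) (rule refl)
  also have "\<dots> = (1 - gamma) * (a pi 0 - (\<Sum>t. gamma ^ t * r pi t))"
    using tele[OF gamma, where x="a pi" and B=Bf, OF ab[OF pi]] by simp
  finally have Zpi: "0 = (1 - gamma) * c0 - Jfun M P gamma rho pi Rw"
    by (simp add: Jpi a0 right_diff_distrib)
  have "0 = (\<integral>x. E x \<partial>occ M P gamma rho mu)"
    using integral_eq_zero_AE[OF zmu] by (simp add: bell)
  also have "\<dots> = (1 - gamma) * (\<Sum>t. gamma ^ t * (a mu t - r mu t - gamma * b mu (Suc t)))"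
    using int_occ[OF mu Em Eb] by (simp add: intE[OF mu] wmu)
  also have "\<dots> = (1 - gamma) * ((\<Sum>t. gamma ^ t * a mu t) - (\<Sum>t. gamma ^ t * r mu t) - gamma * (\<Sum>t. gamma ^ t * b mu (Suc t)))"
    by (subst sum_lin3[OF gamma ab[OF mu] rbd[OF mu] bb[OF mu]]) (rule refl)
  finally have Zmu: "0 = (1 - gamma) * ((\<Sum>t. gamma ^ t * a mu t) - (\<Sum>t. gamma ^ t * r mu t) - gamma * (\<Sum>t. gamma ^ t * b mu (Suc t)))" .
  have "Lmu (occ M P gamma rho mu) pi f = (\<integral>x. Fp x - F x \<partial>occ M P gamma rho mu)"
    by (simp add: Lmu_def Fp_def F_def)
  also have "\<dots> = (1 - gamma) * (\<Sum>t. gamma ^ t * (b mu t - a mu t))"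
    using int_occ[OF mu Lm Lb] by (simp add: intL[OF mu])
  also have "\<dots> = (1 - gamma) * ((\<Sum>t. gamma ^ t * b mu t) - (\<Sum>t. gamma ^ t * a mu t))"
    by (subst sum_lin2[OF gamma bb[OF mu] ab[OF mu]]) (rule refl)
  also have "\<dots> = (1 - gamma) * ((\<Sum>t. gamma ^ t * b mu t) - (\<Sum>t. gamma ^ t * a mu t))
      + (1 - gamma) * ((\<Sum>t. gamma ^ t * a mu t) - (\<Sum>t. gamma ^ t * r mu t) - gamma * (\<Sum>t. gamma ^ t * b mu (Suc t)))"
    using Zmu by simp
  also have "\<dots> = (1 - gamma) * (((\<Sum>t. gamma ^ t * b mu t) - gamma * (\<Sum>t. gamma ^ t * b mu (Suc t))) - (\<Sum>t. gamma ^ t * r mu t))"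
    by (simp add: algebra_simps)
  also have "\<dots> = (1 - gamma) * (b mu 0 - (\<Sum>t. gamma ^ t * r mu t))"
    using tele[OF gamma, where x="b mu" and B=Bf, OF bb[OF mu]] by simp
  also have "\<dots> = (1 - gamma) * c0 - Jfun M P gamma rho mu Rw"
    by (simp add: Jmu b0 right_diff_distrib)
  finally show ?thesis using Zpi by simp
qed

end

context cmdp begin

lemma meas_occ: "polm nu \<Longrightarrow> h \<in> borel_measurable S \<Longrightarrow> h \<in> borel_measurable (occ M P gamma rho nu)"
  by (subst measurable_cong_sets[OF occ_prob(2) refl]) auto

lemma bell_props:
  fixes f Rw :: "'s \<Rightarrow> 'a \<Rightarrow> real"
  assumes pol: "polm pol"
    and fm: "(\<lambda>x. f (fst x) (snd x)) \<in> borel_measurable S" and fb: "\<And>s a. \<bar>f s a\<bar> \<le> Bf"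
    and rm: "(\<lambda>x. Rw (fst x) (snd x)) \<in> borel_measurable S" and rb: "\<And>s a. \<bar>Rw s a\<bar> \<le> 1"
  shows "(\<lambda>x. f (fst x) (snd x) - bellman P gamma pol Rw f (fst x) (snd x)) \<in> borel_measurable S"
    and "\<And>x. x \<in> space S \<Longrightarrow> \<bar>f (fst x) (snd x) - bellman P gamma pol Rw f (fst x) (snd x)\<bar> \<le> Bf + 1 + Bf"
proof -
  define W where "W x = (\<integral>s'. polval f pol s' \<partial>Pk x)" for x
  have Bf: "0 \<le> Bf" using fb[of undefined undefined] by simp
  have pvm: "polval f pol \<in> borel_measurable M" by (rule polval_meas[OF pol fm])
  have pvb: "\<bar>polval f pol s\<bar> \<le> Bf" for s by (rule polval_bound) (rule fb)
  have Wm[measurable]: "W \<in> borel_measurable S"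
    using kern_int(1)[OF kernel pvm pvb] by (simp add: W_def[abs_def])
  have Wb: "\<bar>W x\<bar> \<le> Bf" if "x \<in> space S" for x
    using kern_int(2)[OF kernel pvm pvb that] by (simp add: W_def)
  have eq: "(\<lambda>x. f (fst x) (snd x) - bellman P gamma pol Rw f (fst x) (snd x))
      = (\<lambda>x. f (fst x) (snd x) - Rw (fst x) (snd x) - gamma * W x)"
    by (simp add: bellman_def W_def fun_eq_iff)
  note [measurable] = fm rm
  show "(\<lambda>x. f (fst x) (snd x) - bellman P gamma pol Rw f (fst x) (snd x)) \<in> borel_measurable S"
    unfolding eq by measurable
  fix x assume x: "x \<in> space S"
  have "\<bar>gamma * W x\<bar> \<le> 1 * Bf" unfolding abs_mult
    by (rule mult_mono) (use gamma Wb[OF x] Bf in auto)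
  then show "\<bar>f (fst x) (snd x) - bellman P gamma pol Rw f (fst x) (snd x)\<bar> \<le> Bf + 1 + Bf"
  proof -
    have "bellman P gamma pol Rw f (fst x) (snd x) = Rw (fst x) (snd x) + gamma * W x"
      by (simp add: bellman_def W_def)
    then show ?thesis using fb[of "fst x" "snd x"] rb[of "fst x" "snd x"] \<open>\<bar>gamma * W x\<bar> \<le> 1 * Bf\<close> by linarith
  qed
qed

lemma Emu_props:
  fixes f Tf :: "'s \<Rightarrow> 'a \<Rightarrow> real" and W :: "('s \<Rightarrow> 'a \<Rightarrow> real) set"
  assumes nu: "polm nu"
    and dm: "(\<lambda>x. f (fst x) (snd x) - Tf (fst x) (snd x)) \<in> borel_measurable S"
    and db: "\<And>x. x \<in> space S \<Longrightarrow> \<bar>f (fst x) (snd x) - Tf (fst x) (snd x)\<bar> \<le> Be"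
    and Wm: "\<And>w. w \<in> W \<Longrightarrow> (\<lambda>x. w (fst x) (snd x)) \<in> borel_measurable S"
    and Wr: "\<And>w s a. w \<in> W \<Longrightarrow> 0 \<le> w s a \<and> w s a \<le> Bw"
    and W1: "(\<lambda>s a. 1) \<in> W"
  shows "0 \<le> Emu (occ M P gamma rho nu) W f Tf"
    and "(AE x in occ M P gamma rho nu. f (fst x) (snd x) - Tf (fst x) (snd x) = 0) \<Longrightarrow> Emu (occ M P gamma rho nu) W f Tf = 0"
proof -
  let ?N = "occ M P gamma rho nu"
  define phi where "phi w = \<bar>\<integral>z. w (fst z) (snd z) * (f (fst z) (snd z) - Tf (fst z) (snd z)) \<partial>?N\<bar>" for w
  have E: "Emu ?N W f Tf = (SUP w\<in>W. phi w)" by (simp add: Emu_def phi_def)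
  have "0 \<le> (1::real) \<and> (1::real) \<le> Bw" by (rule Wr[OF W1])
  then have Bw0: "0 \<le> Bw" by linarith
  have pb: "phi w \<le> Bw * Be" if w: "w \<in> W" for w
    unfolding phi_def
  proof (rule int_bound(1)[OF occ_prob(1)[OF nu]])
    note [measurable] = Wm[OF w] dm
    show "(\<lambda>z. w (fst z) (snd z) * (f (fst z) (snd z) - Tf (fst z) (snd z))) \<in> borel_measurable ?N"
      by (rule meas_occ[OF nu]) measurable
    fix z assume "z \<in> space ?N"
    then have z: "z \<in> space S" using space_occ[OF nu] by simp
    show "\<bar>w (fst z) (snd z) * (f (fst z) (snd z) - Tf (fst z) (snd z))\<bar> \<le> Bw * Be"
      unfolding abs_mult by (rule mult_mono) (use Wr[OF w] db[OF z] Bw0 in auto)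
  qed
  have bdd: "bdd_above (phi ` W)" by (rule bdd_aboveI2) (rule pb)
  show "0 \<le> Emu ?N W f Tf" unfolding E
    by (rule cSUP_upper2[OF bdd W1]) (simp add: phi_def)
  assume ae: "AE x in ?N. f (fst x) (snd x) - Tf (fst x) (snd x) = 0"
  have p0: "phi w = 0" for w
  proof -
    have "AE z in ?N. w (fst z) (snd z) * (f (fst z) (snd z) - Tf (fst z) (snd z)) = 0"
      using ae by (rule eventually_mono) simp
    from integral_eq_zero_AE[OF this] show ?thesis by (simp add: phi_def)
  qed
  have ne: "W \<noteq> {}" using W1 by blast
  have "(SUP w\<in>W. phi w) = (SUP w\<in>W. (0::real))" by (rule SUP_cong[OF refl]) (rule p0)
  also have "\<dots> = 0" by (rule cSUP_const[OF ne])
  finally show "Emu ?N W f Tf = 0" unfolding E .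
qed

lemma AE_from_norm:
  fixes f Tf :: "'s \<Rightarrow> 'a \<Rightarrow> real"
  assumes nu: "polm nu"
    and dm: "(\<lambda>x. f (fst x) (snd x) - Tf (fst x) (snd x)) \<in> borel_measurable S"
    and db: "\<And>x. x \<in> space S \<Longrightarrow> \<bar>f (fst x) (snd x) - Tf (fst x) (snd x)\<bar> \<le> Be"
    and n: "(norm2 (occ M P gamma rho nu) (\<lambda>s a. f s a - Tf s a))\<^sup>2 \<le> 0"
  shows "AE x in occ M P gamma rho nu. f (fst x) (snd x) - Tf (fst x) (snd x) = 0"
proof -
  let ?N = "occ M P gamma rho nu"
  define d where "d x = f (fst x) (snd x) - Tf (fst x) (snd x)" for x
  define X where "X = (\<integral>z. (d z)\<^sup>2 \<partial>?N)"
  have X0: "0 \<le> X" unfolding X_def by simp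
  have "(sqrt X)\<^sup>2 \<le> 0" using n by (simp add: norm2_def X_def d_def)
  then have "X = 0" using X0 by simp
  moreover have "integrable ?N (\<lambda>z. (d z)\<^sup>2)"
  proof (rule int_bound(2)[OF occ_prob(1)[OF nu], where B="Be\<^sup>2"])
    note [measurable] = dm
    show "(\<lambda>z. (d z)\<^sup>2) \<in> borel_measurable ?N"
      by (rule meas_occ[OF nu]) (unfold d_def, measurable)
    fix z assume "z \<in> space ?N"
    then have z: "z \<in> space S" using space_occ[OF nu] by simp
    have h: "\<bar>d z\<bar> \<le> Be" using db[OF z] by (simp add: d_def)
    have "(d z)\<^sup>2 = \<bar>d z\<bar>\<^sup>2" by simp
    also have "\<dots> \<le> Be\<^sup>2" by (rule power_mono[OF h abs_ge_zero])
    finally show "\<bar>(d z)\<^sup>2\<bar> \<le> Be\<^sup>2" by simp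
  qed
  ultimately have "AE z in ?N. (d z)\<^sup>2 = 0"
    using integral_nonneg_eq_0_iff_AE[of ?N "\<lambda>z. (d z)\<^sup>2"] by (simp add: X_def)
  then show ?thesis by (rule eventually_mono) (simp add: d_def)
qed

lemma L_self:
  fixes f :: "'s \<Rightarrow> 'a \<Rightarrow> real"
  assumes mu: "polm mu"
    and fm: "(\<lambda>x. f (fst x) (snd x)) \<in> borel_measurable S" and fb: "\<And>s a. \<bar>f s a\<bar> \<le> Bf"
  shows "Lmu (occ M P gamma rho mu) mu f = 0"
proof -
  define F where "F x = f (fst x) (snd x)" for x
  define Fp :: "'s \<times> 'a \<Rightarrow> real" where "Fp x = polval f mu (fst x)" for x
  have Fm[measurable]: "F \<in> borel_measurable S" using fm by (simp add: F_def[abs_def])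
  have Fb: "\<bar>F x\<bar> \<le> Bf" for x using fb by (simp add: F_def)
  have pvm: "polval f mu \<in> borel_measurable M" by (rule polval_meas[OF mu fm])
  have pvb: "\<bar>polval f mu s\<bar> \<le> Bf" for s by (rule polval_bound) (rule fb)
  have Fpm[measurable]: "Fp \<in> borel_measurable S"
  proof -
    have "fst \<in> S \<rightarrow>\<^sub>M M" unfolding SA_def by (rule measurable_fst)
    from measurable_compose[OF this pvm] show ?thesis by (simp add: Fp_def[abs_def] comp_def)
  qed
  have Fpb: "\<bar>Fp x\<bar> \<le> Bf" for x using pvb by (simp add: Fp_def)
  have Lm: "(\<lambda>x. Fp x - F x) \<in> borel_measurable S" by measurable
  have Lb: "\<bar>Fp x - F x\<bar> \<le> Bf + Bf" for x using Fpb[of x] Fb[of x] by linarith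
  have eqt: "(\<integral>x. Fp x \<partial>D mu t) = (\<integral>x. F x \<partial>D mu t)" for t
  proof (cases t)
    case 0
    have "(\<integral>x. Fp x \<partial>D mu 0) = (\<integral>s. polval (\<lambda>s a. Fp (s, a)) mu s \<partial>rho)"
      by (rule int_D0[OF mu Fpm]) (use Fpb in auto)
    also have "\<dots> = (\<integral>s. polval (\<lambda>s a. F (s, a)) mu s \<partial>rho)"
      by (simp add: Fp_def F_def polval_const)
    also have "\<dots> = (\<integral>x. F x \<partial>D mu 0)"
      by (rule int_D0[OF mu Fm, symmetric]) (use Fb in auto)
    finally show ?thesis using 0 by simp
  next
    case (Suc n)
    have "(\<integral>x. Fp x \<partial>D mu (Suc n)) = (\<integral>y. (\<integral>s. polval (\<lambda>s a. Fp (s, a)) mu s \<partial>Pk y) \<partial>D mu n)"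
      by (rule int_Dsuc[OF mu Fpm]) (use Fpb in auto)
    also have "\<dots> = (\<integral>y. (\<integral>s. polval (\<lambda>s a. F (s, a)) mu s \<partial>Pk y) \<partial>D mu n)"
      by (simp add: Fp_def F_def polval_const)
    also have "\<dots> = (\<integral>x. F x \<partial>D mu (Suc n))"
      by (rule int_Dsuc[OF mu Fm, symmetric]) (use Fb in auto)
    finally show ?thesis using Suc by simp
  qed
  have intL: "(\<integral>x. Fp x - F x \<partial>D mu t) = 0" for t
  proof -
    have iF: "integrable (D mu t) F" by (rule D_bound(2)[OF mu Fm]) (use Fb in auto)
    have iFp: "integrable (D mu t) Fp" by (rule D_bound(2)[OF mu Fpm]) (use Fpb in auto)
    show ?thesis using iF iFp eqt[of t] by simp
  qed
  have "Lmu (occ M P gamma rho mu) mu f = (\<integral>x. Fp x - F x \<partial>occ M P gamma rho mu)"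
    by (simp add: Lmu_def Fp_def F_def)
  also have "\<dots> = 0"
    using int_occ[OF mu Lm Lb] by (simp add: intL)
  finally show ?thesis .
qed

lemma J_bounds:
  fixes Rw :: "'s \<Rightarrow> 'a \<Rightarrow> real"
  assumes pol: "polm pol" and rm: "(\<lambda>x. Rw (fst x) (snd x)) \<in> borel_measurable S"
    and rr: "\<And>s a. 0 \<le> Rw s a \<and> Rw s a \<le> 1"
  shows "0 \<le> Jfun M P gamma rho pol Rw" "Jfun M P gamma rho pol Rw \<le> 1"
proof -
  have rb: "\<bar>Rw s a\<bar> \<le> 1" for s a using rr[of s a] by simp
  define r where "r t = (\<integral>x. Rw (fst x) (snd x) \<partial>D pol t)" for t
  have J: "Jfun M P gamma rho pol Rw = (1 - gamma) * (\<Sum>t. gamma ^ t * r t)"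
    using J_eq[OF pol rm rb] by (simp add: r_def)
  have r0: "0 \<le> r t" for t unfolding r_def by (rule Bochner_Integration.integral_nonneg) (use rr in auto)
  have r1: "r t \<le> 1" for t
  proof -
    have "\<bar>r t\<bar> \<le> 1" unfolding r_def by (rule D_bound(1)[OF pol rm]) (use rb in auto)
    then show ?thesis by simp
  qed
  have rabs: "\<bar>r t\<bar> \<le> 1" for t using r0[of t] r1[of t] by simp
  have s1: "summable (\<lambda>t. gamma ^ t * r t)" by (rule geom_summable[OF gamma rabs])
  have s2: "summable (\<lambda>t. gamma ^ t)" using gamma by (intro summable_geometric) auto
  have "0 \<le> (\<Sum>t. gamma ^ t * r t)" by (rule suminf_nonneg[OF s1]) (use r0 gamma in simp)
  then show "0 \<le> Jfun M P gamma rho pol Rw" unfolding J using gamma by simp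
  have "(\<Sum>t. gamma ^ t * r t) \<le> (\<Sum>t. gamma ^ t)"
    by (rule suminf_le[OF _ s1 s2]) (use r1 gamma in \<open>simp add: mult_left_le\<close>)
  also have "\<dots> = 1 / (1 - gamma)" by (rule suminf_geometric) (use gamma in simp)
  finally have "(1 - gamma) * (\<Sum>t. gamma ^ t * r t) \<le> (1 - gamma) * (1 / (1 - gamma))"
    by (rule mult_left_mono) (use gamma in simp)
  then show "Jfun M P gamma rho pol Rw \<le> 1" unfolding J using gamma by simp
qed

end

theorem theorem1:
  fixes M :: "'s measure"
    and P :: "'s \<Rightarrow> 'a::finite \<Rightarrow> 's measure"
    and R C :: "'s \<Rightarrow> 'a \<Rightarrow> real"
    and gamma :: real
    and rho :: "'s measure"
    and Pi :: "('s \<Rightarrow> 'a pmf) set"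
    and F G W :: "('s \<Rightarrow> 'a \<Rightarrow> real) set"
    and Bw :: real
    and mu :: "'s \<Rightarrow> 'a pmf"
    and beta lambda :: real
    and fr fc :: "('s \<Rightarrow> 'a pmf) \<Rightarrow> ('s \<Rightarrow> 'a \<Rightarrow> real)"
    and pihat :: "'s \<Rightarrow> 'a pmf"
  assumes gamma: "0 \<le> gamma" "gamma < 1"
    and kernel: "(\<lambda>x. P (fst x) (snd x)) \<in> SA M \<rightarrow>\<^sub>M prob_algebra M"
    and rho: "prob_space rho" "sets rho = sets M"
    and R_meas: "(\<lambda>x. R (fst x) (snd x)) \<in> borel_measurable (SA M)"
    and C_meas: "(\<lambda>x. C (fst x) (snd x)) \<in> borel_measurable (SA M)"
    and R_range: "\<And>s a. 0 \<le> R s a \<and> R s a \<le> 1"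
    and C_range: "\<And>s a. -1 \<le> C s a \<and> C s a \<le> 1"
    and Pi_meas: "\<And>pol a. pol \<in> Pi \<Longrightarrow> (\<lambda>s. pmf (pol s) a) \<in> borel_measurable M"
    and F_meas: "\<And>f. f \<in> F \<Longrightarrow> (\<lambda>x. f (fst x) (snd x)) \<in> borel_measurable (SA M)"
    and F_range: "\<And>f s a. f \<in> F \<Longrightarrow> 0 \<le> f s a \<and> f s a \<le> 1 / (1 - gamma)"
    and G_meas: "\<And>g. g \<in> G \<Longrightarrow> (\<lambda>x. g (fst x) (snd x)) \<in> borel_measurable (SA M)"
    and G_range: "\<And>g s a. g \<in> G \<Longrightarrow> - (1 / (1 - gamma)) \<le> g s a \<and> g s a \<le> 1 / (1 - gamma)"
    and W_meas: "\<And>w. w \<in> W \<Longrightarrow> (\<lambda>x. w (fst x) (snd x)) \<in> borel_measurable (SA M)"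
    and W_range: "\<And>w s a. w \<in> W \<Longrightarrow> 0 \<le> w s a \<and> w s a \<le> Bw"
    and W_one: "(\<lambda>s a. 1) \<in> W"
    and realiz_r: "\<And>pol. pol \<in> Pi \<Longrightarrow> \<exists>f\<in>F. \<forall>pol'\<in>Pi.
                      (norm2 (occ M P gamma rho pol') (\<lambda>s a. f s a - bellman P gamma pol R f s a))\<^sup>2 \<le> 0"
    and realiz_c: "\<And>pol. pol \<in> Pi \<Longrightarrow> \<exists>g\<in>G. \<forall>pol'\<in>Pi.
                      (norm2 (occ M P gamma rho pol') (\<lambda>s a. g s a - bellman P gamma pol C g s a))\<^sup>2 \<le> 0"
    and mu_in: "mu \<in> Pi"
    and beta: "0 \<le> beta"
    and lambda: "0 < lambda"
    and fr_opt: "\<And>pol. pol \<in> Pi \<Longrightarrow> fr pol \<in> F \<and>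
        (\<forall>f\<in>F. Lmu (occ M P gamma rho mu) pol (fr pol)
                  + beta * Emu (occ M P gamma rho mu) W (fr pol) (bellman P gamma pol R (fr pol))
               \<le> Lmu (occ M P gamma rho mu) pol f
                  + beta * Emu (occ M P gamma rho mu) W f (bellman P gamma pol R f))"
    and fc_opt: "\<And>pol. pol \<in> Pi \<Longrightarrow> fc pol \<in> G \<and>
        (\<forall>g\<in>G. - lambda * Lmu (occ M P gamma rho mu) pol (fc pol)
                  + beta * Emu (occ M P gamma rho mu) W (fc pol) (bellman P gamma pol C (fc pol))
               \<le> - lambda * Lmu (occ M P gamma rho mu) pol g
                  + beta * Emu (occ M P gamma rho mu) W g (bellman P gamma pol C g))"
    and pihat_opt: "pihat \<in> Pi \<and>
        (\<forall>pol\<in>Pi. Lmu (occ M P gamma rho mu) pol (fr pol)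
                    - lambda * max (Lmu (occ M P gamma rho mu) pol (fc pol)) 0
                 \<le> Lmu (occ M P gamma rho mu) pihat (fr pihat)
                    - lambda * max (Lmu (occ M P gamma rho mu) pihat (fc pihat)) 0)"
  shows "Jfun M P gamma rho pihat R \<ge> Jfun M P gamma rho mu R
       \<and> max (Jfun M P gamma rho pihat C) 0 \<le> max (Jfun M P gamma rho mu C) 0 + 1 / lambda"
proof -
  interpret cmdp M P gamma rho
    by (rule cmdp.intro[OF gamma(1) gamma(2) kernel rho(1) rho(2)])
  have pm: "polm pol" if "pol \<in> Pi" for pol using Pi_meas[OF that] by (simp add: polm_def)
  have mu: "polm mu" by (rule pm[OF mu_in])
  have Rb: "\<bar>R s a\<bar> \<le> 1" for s a using R_range[of s a] by simp
  have Cb: "\<bar>C s a\<bar> \<le> 1" for s a using C_range[of s a] by (simp add: abs_le_iff)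
  have fbF: "\<bar>f s a\<bar> \<le> 1 / (1 - gamma)" if "f \<in> F" for f s a using F_range[OF that, of s a] by simp
  have fbG: "\<bar>g s a\<bar> \<le> 1 / (1 - gamma)" if "g \<in> G" for g s a using G_range[OF that, of s a] by (auto intro!: abs_leI)
  let ?N = "occ M P gamma rho mu"
  let ?Jr = "Jfun M P gamma rho"
  have rew: "Lmu ?N pol (fr pol) \<le> ?Jr pol R - ?Jr mu R" if pol: "pol \<in> Pi" for pol
  proof -
    obtain f where f: "f \<in> F" and fz: "\<forall>pol'\<in>Pi.
        (norm2 (occ M P gamma rho pol') (\<lambda>s a. f s a - bellman P gamma pol R f s a))\<^sup>2 \<le> 0"
      using realiz_r[OF pol] by blast
    note bp = bell_props[OF pm[OF pol] F_meas[OF f] fbF[OF f] R_meas Rb]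
    have ae_pi: "AE x in occ M P gamma rho pol. f (fst x) (snd x) - bellman P gamma pol R f (fst x) (snd x) = 0"
      by (rule AE_from_norm[OF pm[OF pol] bp(1) bp(2)], assumption, rule bspec[OF fz pol])
    have ae_mu: "AE x in ?N. f (fst x) (snd x) - bellman P gamma pol R f (fst x) (snd x) = 0"
      by (rule AE_from_norm[OF mu bp(1) bp(2)], assumption, rule bspec[OF fz mu_in])
    have Lf: "Lmu ?N pol f = ?Jr pol R - ?Jr mu R"
      by (rule key[OF pm[OF pol] mu F_meas[OF f] fbF[OF f] R_meas Rb ae_pi ae_mu])
    have Ef: "Emu ?N W f (bellman P gamma pol R f) = 0"
      by (rule Emu_props(2)[where f="f" and Tf="bellman P gamma pol R f" and W=W and Bw=Bw and nu=mu, OF mu bp(1) _ _ _ W_one ae_mu]) (erule bp(2), erule W_meas, erule W_range)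
    have frF: "fr pol \<in> F" using conjunct1[OF fr_opt[OF pol]] .
    note bpr = bell_props[OF pm[OF pol] F_meas[OF frF] fbF[OF frF] R_meas Rb]
    have E0: "0 \<le> Emu ?N W (fr pol) (bellman P gamma pol R (fr pol))"
      by (rule Emu_props(1)[where f="fr pol" and Tf="bellman P gamma pol R (fr pol)" and W=W and Bw=Bw and nu=mu, OF mu bpr(1) _ _ _ W_one]) (erule bpr(2), erule W_meas, erule W_range)
    have opt: "Lmu ?N pol (fr pol) + beta * Emu ?N W (fr pol) (bellman P gamma pol R (fr pol))
        \<le> Lmu ?N pol f + beta * Emu ?N W f (bellman P gamma pol R f)"
      using bspec[OF conjunct2[OF fr_opt[OF pol]] f] .
    have "0 \<le> beta * Emu ?N W (fr pol) (bellman P gamma pol R (fr pol))"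
      by (rule mult_nonneg_nonneg[OF beta E0])
    then show ?thesis using opt Lf Ef by simp
  qed
  have cost: "?Jr pol C - ?Jr mu C \<le> Lmu ?N pol (fc pol)" if pol: "pol \<in> Pi" for pol
  proof -
    obtain g where g: "g \<in> G" and gz: "\<forall>pol'\<in>Pi.
        (norm2 (occ M P gamma rho pol') (\<lambda>s a. g s a - bellman P gamma pol C g s a))\<^sup>2 \<le> 0"
      using realiz_c[OF pol] by blast
    note bp = bell_props[OF pm[OF pol] G_meas[OF g] fbG[OF g] C_meas Cb]
    have ae_pi: "AE x in occ M P gamma rho pol. g (fst x) (snd x) - bellman P gamma pol C g (fst x) (snd x) = 0"
      by (rule AE_from_norm[OF pm[OF pol] bp(1) bp(2)], assumption, rule bspec[OF gz pol])
    have ae_mu: "AE x in ?N. g (fst x) (snd x) - bellman P gamma pol C g (fst x) (snd x) = 0"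
      by (rule AE_from_norm[OF mu bp(1) bp(2)], assumption, rule bspec[OF gz mu_in])
    have Lg: "Lmu ?N pol g = ?Jr pol C - ?Jr mu C"
      by (rule key[OF pm[OF pol] mu G_meas[OF g] fbG[OF g] C_meas Cb ae_pi ae_mu])
    have Eg: "Emu ?N W g (bellman P gamma pol C g) = 0"
      by (rule Emu_props(2)[where f="g" and Tf="bellman P gamma pol C g" and W=W and Bw=Bw and nu=mu, OF mu bp(1) _ _ _ W_one ae_mu]) (erule bp(2), erule W_meas, erule W_range)
    have fcG: "fc pol \<in> G" using conjunct1[OF fc_opt[OF pol]] .
    note bpc = bell_props[OF pm[OF pol] G_meas[OF fcG] fbG[OF fcG] C_meas Cb]
    have E0: "0 \<le> Emu ?N W (fc pol) (bellman P gamma pol C (fc pol))"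
      by (rule Emu_props(1)[where f="fc pol" and Tf="bellman P gamma pol C (fc pol)" and W=W and Bw=Bw and nu=mu, OF mu bpc(1) _ _ _ W_one]) (erule bpc(2), erule W_meas, erule W_range)
    have opt: "- lambda * Lmu ?N pol (fc pol) + beta * Emu ?N W (fc pol) (bellman P gamma pol C (fc pol))
        \<le> - lambda * Lmu ?N pol g + beta * Emu ?N W g (bellman P gamma pol C g)"
      using bspec[OF conjunct2[OF fc_opt[OF pol]] g] .
    have nn: "0 \<le> beta * Emu ?N W (fc pol) (bellman P gamma pol C (fc pol))"
      by (rule mult_nonneg_nonneg[OF beta E0])
    have "- lambda * Lmu ?N pol (fc pol) \<le> - lambda * (?Jr pol C - ?Jr mu C)"
      using opt nn Lg Eg by simp
    then have "lambda * (?Jr pol C - ?Jr mu C) \<le> lambda * Lmu ?N pol (fc pol)" by simp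
    then show ?thesis by (rule mult_left_le_imp_le) (rule lambda)
  qed
  have ph: "pihat \<in> Pi" using conjunct1[OF pihat_opt] .
  have frmu: "fr mu \<in> F" using conjunct1[OF fr_opt[OF mu_in]] .
  have fcmu: "fc mu \<in> G" using conjunct1[OF fc_opt[OF mu_in]] .
  have L1: "Lmu ?N mu (fr mu) = 0" by (rule L_self[OF mu F_meas[OF frmu] fbF[OF frmu]])
  have L2: "Lmu ?N mu (fc mu) = 0" by (rule L_self[OF mu G_meas[OF fcmu] fbG[OF fcmu]])
  define A where "A = Lmu ?N pihat (fr pihat)"
  define Bc where "Bc = Lmu ?N pihat (fc pihat)"
  have "Lmu ?N mu (fr mu) - lambda * max (Lmu ?N mu (fc mu)) 0 \<le> A - lambda * max Bc 0"
    using bspec[OF conjunct2[OF pihat_opt] mu_in] unfolding A_def Bc_def .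
  then have obj: "lambda * max Bc 0 \<le> A" using L1 L2 by simp
  have m0: "0 \<le> lambda * max Bc 0" using lambda by simp
  have r1: "A \<le> ?Jr pihat R - ?Jr mu R" unfolding A_def by (rule rew[OF ph])
  have c1: "?Jr pihat C - ?Jr mu C \<le> Bc" unfolding Bc_def by (rule cost[OF ph])
  have Jr1: "?Jr pihat R \<le> 1" by (rule J_bounds(2)[OF pm[OF ph] R_meas R_range])
  have Jr0: "0 \<le> ?Jr mu R" by (rule J_bounds(1)[OF mu R_meas R_range])
  have g1: "?Jr pihat R \<ge> ?Jr mu R" using obj m0 r1 by linarith
  have "lambda * max Bc 0 \<le> 1" using obj r1 Jr1 Jr0 by linarith
  then have "max Bc 0 * lambda \<le> 1" by (simp only: mult.commute)
  then have "max Bc 0 \<le> 1 / lambda" by (subst pos_le_divide_eq[OF lambda])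
  then have "?Jr pihat C \<le> ?Jr mu C + 1 / lambda" using c1 by linarith
  moreover have "0 < 1 / lambda" using lambda by simp
  ultimately have g2: "max (?Jr pihat C) 0 \<le> max (?Jr mu C) 0 + 1 / lambda"
    by (cases "?Jr pihat C \<le> 0"; cases "?Jr mu C \<le> 0") (simp_all add: max_def)
  show ?thesis using g1 g2 by simp
qed

end
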